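(* Let $\mathbf{k}$ be a field, $p\ge3$ and $q\ge1$ integers, $S=\mathbf{k}[e_1,\dots,e_{qp}]$, and in $S[t]$ let $f_0=t^q+e_pt^{q-1}+e_{2p}t^{q-2}+\cdots+e_{qp}$ and $f_k=e_kt^{q-1}+e_{p+k}t^{q-2}+\cdots+e_{(q-1)p+k}$ for $1\le k\le p-1$. Let $I=\langle f_0,\dots,f_{p-1}\rangle\cap S$, and let $J$ be the ideal of $S$ generated by the maximal ($(2q-1)\times(2q-1)$) minors of the matrix $A$ defined below. Then $\sqrt{J}\subseteq\sqrt{I}$. Moreover, when $p$ is prime and $\mathbf{k}=\mathbb{F}_p$, $\sqrt{J}\subseteq I$.
   Context: Set $e_0=1$. $A=[A_0\ A_1\ \cdots\ A_{p-1}]$ is the $(2q-1)\times((q-1)+(p-1)q)$ block matrix where $A_0$ is the $(2q-1)\times(q-1)$ matrix with $(a,c)$ entry $e_{(a-c)p}$ if $0\le a-c\le q$ and $0$ otherwise, and for $1\le i\le p-1$, $A_i$ is the $(2q-1)\times q$ matrix with $(a,c)$ entry $e_{(a-c)p+i}$ if $0\le a-c\le q-1$ and $0$ otherwise. (Thus $[A_0\ A_i]$ is the Sylvester matrix of $f_0$ and $f_i$.) *)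

theory Defs
  imports "HOL-Library.Poly_Mapping" "HOL-Computational_Algebra.Polynomial"
    "Jordan_Normal_Form.Determinant" "Jordan_Normal_Form.DL_Submatrix"
begin

text \<open>Multivariate polynomials over a field: the ambient ring
  (nat =>0 nat) =>0 'a in countably many variables; variable number j is e_j.
  The ring S = k[e_1,...,e_{qp}] is the subring of polynomials only involving
  the variables e_1, ..., e_{qp}.\<close>

type_synonym 'a mpol = "(nat \<Rightarrow>\<^sub>0 nat) \<Rightarrow>\<^sub>0 'a"

definition Var :: "nat \<Rightarrow> 'a::comm_ring_1 mpol" where
  "Var j = Poly_Mapping.single (Poly_Mapping.single j 1) 1"

definition mvars :: "'a::comm_ring_1 mpol \<Rightarrow> nat set" where
  "mvars f = \<Union> (Poly_Mapping.keys ` Poly_Mapping.keys f)"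

definition Sring :: "nat \<Rightarrow> 'a::comm_ring_1 mpol set" where
  "Sring n = {f. mvars f \<subseteq> {1..n}}"

definition Sring_t :: "nat \<Rightarrow> 'a::comm_ring_1 mpol poly set" where
  "Sring_t n = {P. \<forall>i. coeff P i \<in> Sring n}"

definition gen_ideal :: "'b::comm_ring_1 set \<Rightarrow> 'b set \<Rightarrow> 'b set" where
  "gen_ideal R G = {x. \<exists>c. (\<forall>g\<in>G. c g \<in> R) \<and> x = (\<Sum>g\<in>G. c g * g)}"

definition radical_in :: "'b::comm_ring_1 set \<Rightarrow> 'b set \<Rightarrow> 'b set" where
  "radical_in R X = {x\<in>R. \<exists>m. x ^ m \<in> X}"

definition e :: "nat \<Rightarrow> 'a::comm_ring_1 mpol" where
  "e j = (if j = 0 then 1 else Var j)"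

definition f0 :: "nat \<Rightarrow> nat \<Rightarrow> 'a::comm_ring_1 mpol poly" where
  "f0 p q = monom 1 q + (\<Sum>j=1..q. monom (e (j*p)) (q - j))"

definition fk :: "nat \<Rightarrow> nat \<Rightarrow> nat \<Rightarrow> 'a::comm_ring_1 mpol poly" where
  "fk p q k = (\<Sum>j=0..<q. monom (e (j*p + k)) (q - 1 - j))"

definition fgen :: "nat \<Rightarrow> nat \<Rightarrow> nat \<Rightarrow> 'a::comm_ring_1 mpol poly" where
  "fgen p q k = (if k = 0 then f0 p q else fk p q k)"

text \<open>I = <f_0,...,f_{p-1}> \<inter> S (S embedded into S[t] as constants).\<close>
definition I_ideal :: "nat \<Rightarrow> nat \<Rightarrow> 'a::comm_ring_1 mpol set" where
  "I_ideal p q = {x \<in> Sring (q*p).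
     [:x:] \<in> gen_ideal (Sring_t (q*p)) (fgen p q ` {0..<p})}"

text \<open>Entries of A = [A_0 A_1 ... A_{p-1}]: row a < 2q-1, global column c'.
  Columns 0..q-2 form A_0; columns q-1+(i-1)q .. q-1+iq-1 form A_i.\<close>
definition A_entry :: "nat \<Rightarrow> nat \<Rightarrow> nat \<Rightarrow> nat \<Rightarrow> 'a::comm_ring_1 mpol" where
  "A_entry p q a c' =
     (if c' < q - 1 then
        (if c' \<le> a \<and> a - c' \<le> q then e ((a - c') * p) else 0)
      else
        (let i = (c' - (q - 1)) div q + 1; c = (c' - (q - 1)) mod q in
         if c \<le> a \<and> a - c \<le> q - 1 then e ((a - c) * p + i) else 0))"

definition A_mat :: "nat \<Rightarrow> nat \<Rightarrow> 'a::comm_ring_1 mpol mat" where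
  "A_mat p q = mat (2*q - 1) ((q - 1) + (p - 1) * q) (\<lambda>(a, c). A_entry p q a c)"

definition max_minors :: "nat \<Rightarrow> nat \<Rightarrow> 'a::comm_ring_1 mpol set" where
  "max_minors p q = {det (submatrix (A_mat p q) {0..<2*q-1} C) | C.
      C \<subseteq> {0..<(q - 1) + (p - 1) * q} \<and> card C = 2*q - 1}"

definition J_ideal :: "nat \<Rightarrow> nat \<Rightarrow> 'a::comm_ring_1 mpol set" where
  "J_ideal p q = gen_ideal (Sring (q*p)) (max_minors p q)"

end

theory Submission
  imports Defs
begin

definition mon_eval :: "(nat \<Rightarrow> 'b::comm_semiring_1) \<Rightarrow> (nat \<Rightarrow>\<^sub>0 nat) \<Rightarrow> 'b" where
  "mon_eval g m = (\<Prod>v\<in>Poly_Mapping.keys m. g v ^ Poly_Mapping.lookup m v)"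

lemma mon_eval_superset:
  assumes "finite K" "Poly_Mapping.keys m \<subseteq> K"
  shows "mon_eval g m = (\<Prod>v\<in>K. g v ^ Poly_Mapping.lookup m v)"
  unfolding mon_eval_def
  by (rule prod.mono_neutral_left) (use assms in \<open>auto simp: in_keys_iff\<close>)

lemma mon_eval_add: "mon_eval g (m + n) = mon_eval g m * mon_eval g n"
proof -
  let ?K = "Poly_Mapping.keys m \<union> Poly_Mapping.keys n"
  have "mon_eval g (m + n) = (\<Prod>v\<in>?K. g v ^ Poly_Mapping.lookup (m+n) v)"
    by (rule mon_eval_superset) (auto simp: keys_add)
  also have "\<dots> = (\<Prod>v\<in>?K. g v ^ Poly_Mapping.lookup m v * g v ^ Poly_Mapping.lookup n v)"
    by (simp add: lookup_add power_add)
  also have "\<dots> = (\<Prod>v\<in>?K. g v ^ Poly_Mapping.lookup m v) * (\<Prod>v\<in>?K. g v ^ Poly_Mapping.lookup n v)"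
    by (rule prod.distrib)
  also have "\<dots> = mon_eval g m * mon_eval g n"
    by (subst (1 2) mon_eval_superset[of ?K]) auto
  finally show ?thesis .
qed

lemma mon_eval_zero[simp]: "mon_eval g 0 = 1"
  by (simp add: mon_eval_def)

lemma mon_eval_single[simp]: "mon_eval g (Poly_Mapping.single v k) = g v ^ k"
  by (cases "k = 0") (simp_all add: mon_eval_def)

lemma crh:
  assumes "comm_ring_hom C"
  shows "C 0 = 0" "C (a + b) = C a + C b" "C (a * b) = C a * C b" "C 1 = 1"
proof -
  interpret comm_ring_hom C by fact
  show "C 0 = 0" "C (a + b) = C a + C b" "C (a * b) = C a * C b" "C 1 = 1"
    by (simp_all add: hom_add hom_mult)
qed

definition mp_eval :: "('a::comm_ring_1 \<Rightarrow> 'b::comm_ring_1) \<Rightarrow> (nat \<Rightarrow> 'b) \<Rightarrow> 'a mpol \<Rightarrow> 'b" where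
  "mp_eval C g f = (\<Sum>m\<in>Poly_Mapping.keys f. C (Poly_Mapping.lookup f m) * mon_eval g m)"

lemma mp_eval_superset:
  assumes "comm_ring_hom C" "finite K" "Poly_Mapping.keys f \<subseteq> K"
  shows "mp_eval C g f = (\<Sum>m\<in>K. C (Poly_Mapping.lookup f m) * mon_eval g m)"
  unfolding mp_eval_def
  by (rule sum.mono_neutral_left) (use assms in \<open>auto simp: in_keys_iff crh[OF assms(1)]\<close>)

lemma mp_eval_add:
  assumes "comm_ring_hom C"
  shows "mp_eval C g (f + h) = mp_eval C g f + mp_eval C g h"
proof -
  let ?K = "Poly_Mapping.keys f \<union> Poly_Mapping.keys h"
  have "mp_eval C g (f + h) = (\<Sum>m\<in>?K. C (Poly_Mapping.lookup (f+h) m) * mon_eval g m)"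
    by (rule mp_eval_superset[OF assms]) (auto simp: keys_add)
  also have "\<dots> = (\<Sum>m\<in>?K. C (Poly_Mapping.lookup f m) * mon_eval g m + C (Poly_Mapping.lookup h m) * mon_eval g m)"
    by (simp add: lookup_add crh[OF assms] distrib_right)
  also have "\<dots> = (\<Sum>m\<in>?K. C (Poly_Mapping.lookup f m) * mon_eval g m) + (\<Sum>m\<in>?K. C (Poly_Mapping.lookup h m) * mon_eval g m)"
    by (rule sum.distrib)
  also have "\<dots> = mp_eval C g f + mp_eval C g h"
    by (subst (1 2) mp_eval_superset[OF assms, of ?K]) auto
  finally show ?thesis .
qed

lemma mp_eval_zero: "mp_eval C g 0 = 0"
  by (simp add: mp_eval_def)

lemma mp_eval_single:
  assumes "comm_ring_hom C"
  shows "mp_eval C g (Poly_Mapping.single m c) = C c * mon_eval g m"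
proof (cases "c = 0")
  case True then show ?thesis by (simp add: mp_eval_zero crh[OF assms])
next
  case False then show ?thesis by (simp add: mp_eval_def)
qed

lemma mp_eval_sum:
  assumes "comm_ring_hom C"
  shows "mp_eval C g (sum F S) = (\<Sum>x\<in>S. mp_eval C g (F x))"
proof (cases "finite S")
  case True then show ?thesis
    by (induct rule: finite_induct) (simp_all add: mp_eval_zero mp_eval_add[OF assms])
next
  case False then show ?thesis by (simp add: mp_eval_zero)
qed

lemma pm_sum_single: "(f :: 'k \<Rightarrow>\<^sub>0 'v::comm_monoid_add) = (\<Sum>m\<in>Poly_Mapping.keys f. Poly_Mapping.single m (Poly_Mapping.lookup f m))"
proof (rule poly_mapping_eqI)
  fix k
  have "Poly_Mapping.lookup (\<Sum>m\<in>Poly_Mapping.keys f. Poly_Mapping.single m (Poly_Mapping.lookup f m)) k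
     = (\<Sum>m\<in>Poly_Mapping.keys f. Poly_Mapping.lookup f m when m = k)"
    by (simp add: lookup_sum lookup_single)
  also have "\<dots> = Poly_Mapping.lookup f k"
    by (cases "k \<in> Poly_Mapping.keys f") (auto simp: in_keys_iff when_def sum.delta)
  finally show "Poly_Mapping.lookup f k = Poly_Mapping.lookup (\<Sum>m\<in>Poly_Mapping.keys f. Poly_Mapping.single m (Poly_Mapping.lookup f m)) k" by simp
qed

lemma mp_eval_mult:
  assumes "comm_ring_hom C"
  shows "mp_eval C g (f * h) = mp_eval C g f * mp_eval C g h"
proof -
  have "f * h = (\<Sum>m\<in>Poly_Mapping.keys f. Poly_Mapping.single m (Poly_Mapping.lookup f m)) *
                (\<Sum>n\<in>Poly_Mapping.keys h. Poly_Mapping.single n (Poly_Mapping.lookup h n))"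
    by (subst (1) pm_sum_single[of f], subst (1) pm_sum_single[of h]) (rule refl)
  also have "\<dots> = (\<Sum>m\<in>Poly_Mapping.keys f. \<Sum>n\<in>Poly_Mapping.keys h.
        Poly_Mapping.single (m + n) (Poly_Mapping.lookup f m * Poly_Mapping.lookup h n))"
    by (simp add: sum_product mult_single)
  finally have fh: "f * h = \<dots>" .
  have "mp_eval C g (f * h) = (\<Sum>m\<in>Poly_Mapping.keys f. \<Sum>n\<in>Poly_Mapping.keys h.
        (C (Poly_Mapping.lookup f m) * mon_eval g m) * (C (Poly_Mapping.lookup h n) * mon_eval g n))"
    unfolding fh mp_eval_sum[OF assms] mp_eval_single[OF assms]
    by (simp add: crh[OF assms] mon_eval_add ac_simps)
  also have "\<dots> = mp_eval C g f * mp_eval C g h"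
    unfolding mp_eval_def by (simp add: sum_product)
  finally show ?thesis .
qed

lemma mp_eval_one:
  assumes "comm_ring_hom C"
  shows "mp_eval C g 1 = 1"
proof -
  have "(1 :: 'a mpol) = Poly_Mapping.single 0 1"
    by simp
  then show ?thesis
    using mp_eval_single[OF assms, of g 0 1] by (simp add: crh[OF assms])
qed

lemma mp_eval_hom:
  assumes "comm_ring_hom C"
  shows "comm_ring_hom (mp_eval C g)"
  by unfold_locales (simp_all add: mp_eval_add[OF assms] mp_eval_mult[OF assms] mp_eval_one[OF assms] mp_eval_zero)

lemma mp_eval_Var:
  assumes "comm_ring_hom C"
  shows "mp_eval C g (Var v) = g v"
  unfolding Var_def mp_eval_single[OF assms] by (simp add: crh[OF assms])

lemma hom_single0: "comm_ring_hom (\<lambda>c::'a::comm_ring_1. Poly_Mapping.single (0::nat \<Rightarrow>\<^sub>0 nat) c)"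
  by unfold_locales (simp_all add: single_add mult_single)

lemma hom_pconst: "comm_ring_hom (\<lambda>c::'a::comm_ring_1. [:c:])"
  by unfold_locales (simp_all add: one_pCons)

lemma Var_power: "(Var v :: 'a::comm_ring_1 mpol) ^ k = Poly_Mapping.single (Poly_Mapping.single v k) 1"
  by (induct k) (simp_all add: Var_def mult_single flip: single_add)

lemma prod_single1:
  "(\<Prod>v\<in>S. Poly_Mapping.single (s v) (1::'a::comm_ring_1)) = Poly_Mapping.single (\<Sum>v\<in>S. s v) 1"
  by (cases "finite S", induct rule: finite_induct) (simp_all add: mult_single)

lemma mon_eval_Var: "mon_eval Var m = (Poly_Mapping.single m 1 :: 'a::comm_ring_1 mpol)"
  unfolding mon_eval_def Var_power prod_single1
  by (subst (2) pm_sum_single[of m]) (rule refl)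

lemma mp_eval_self: "mp_eval (\<lambda>c. Poly_Mapping.single 0 c) Var f = (f :: 'a::comm_ring_1 mpol)"
proof -
  have "mp_eval (\<lambda>c. Poly_Mapping.single 0 c) Var f
      = (\<Sum>m\<in>Poly_Mapping.keys f. Poly_Mapping.single m (Poly_Mapping.lookup f m))"
    unfolding mp_eval_def mon_eval_Var by (simp add: mult_single)
  then show ?thesis by (simp flip: pm_sum_single)
qed

lemma mp_eval_comp:
  assumes "comm_ring_hom h"
  shows "h (mp_eval C g f) = mp_eval (h \<circ> C) (h \<circ> g) f"
proof -
  interpret comm_ring_hom h by fact
  show ?thesis unfolding mp_eval_def mon_eval_def
    by (simp add: hom_sum hom_mult hom_prod hom_power)
qed

lemma mp_eval_pconst: "mp_eval (\<lambda>c. [:Poly_Mapping.single 0 c:]) (\<lambda>v. [:Var v:]) f = [:(f :: 'a::comm_ring_1 mpol):]"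
  using mp_eval_comp[OF hom_pconst, of "\<lambda>c. Poly_Mapping.single 0 c" Var f]
  by (simp add: mp_eval_self o_def)

lemma mp_eval_cong:
  assumes "\<forall>v\<in>mvars f. g v = g' v"
  shows "mp_eval C g f = mp_eval C g' f"
  unfolding mp_eval_def mon_eval_def
  by (rule sum.cong[OF refl], rule arg_cong[where f="\<lambda>x. _ * x"], rule prod.cong[OF refl])
     (use assms in \<open>auto simp: mvars_def\<close>)

subsection \<open>Ideal congruences\<close>

locale idl =
  fixes R K :: "'b::comm_ring_1 set"
  assumes R_mult: "a \<in> R \<Longrightarrow> b \<in> R \<Longrightarrow> a * b \<in> R"
    and R_one: "1 \<in> R"
    and K_add: "a \<in> K \<Longrightarrow> b \<in> K \<Longrightarrow> a + b \<in> K"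
    and K_mult: "r \<in> R \<Longrightarrow> a \<in> K \<Longrightarrow> r * a \<in> K"
    and K_zero: "0 \<in> K"
begin

lemma K_sum: "(\<And>x. x \<in> S \<Longrightarrow> F x \<in> K) \<Longrightarrow> sum F S \<in> K"
  by (induct S rule: infinite_finite_induct) (auto intro: K_add K_zero)

lemma step:
  assumes "a \<in> R" "b \<in> R" "a' \<in> R" "b' \<in> R" "a - b \<in> K" "a' - b' \<in> K"
  shows "a * a' - b * b' \<in> K"
proof -
  have "a * a' - b * b' = a * (a' - b') + b' * (a - b)" by (simp add: algebra_simps)
  then show ?thesis using assms by (auto intro: K_add K_mult)
qed

lemma power_cong:
  assumes "a \<in> R" "b \<in> R" "a - b \<in> K"
  shows "a ^ n \<in> R \<and> b ^ n \<in> R \<and> a ^ n - b ^ n \<in> K"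
  by (induct n) (use assms in \<open>auto intro: step R_mult R_one K_zero\<close>)

lemma prod_cong:
  assumes "finite S" "\<And>v. v \<in> S \<Longrightarrow> a v \<in> R \<and> b v \<in> R \<and> a v - b v \<in> K"
  shows "prod a S \<in> R \<and> prod b S \<in> R \<and> prod a S - prod b S \<in> K"
  using assms by (induct S rule: finite_induct) (auto intro: step R_mult R_one K_zero)

lemma mp_eval_ideal_cong:
  assumes C: "\<And>c. C c \<in> R"
    and g: "\<And>v. v \<in> mvars f \<Longrightarrow> g v \<in> R \<and> g' v \<in> R \<and> g v - g' v \<in> K"
  shows "mp_eval C g f - mp_eval C g' f \<in> K"
proof -
  have mon: "mon_eval g m - mon_eval g' m \<in> K" if m: "m \<in> Poly_Mapping.keys f" for m
  proof -
    have "v \<in> mvars f" if "v \<in> Poly_Mapping.keys m" for v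
      using m that by (auto simp: mvars_def)
    then show ?thesis unfolding mon_eval_def
      by (intro prod_cong[THEN conjunct2, THEN conjunct2] finite_keys power_cong) (auto dest: g)
  qed
  have "mp_eval C g f - mp_eval C g' f =
     (\<Sum>m\<in>Poly_Mapping.keys f. C (Poly_Mapping.lookup f m) * (mon_eval g m - mon_eval g' m))"
    unfolding mp_eval_def by (simp add: sum_subtractf right_diff_distrib)
  also have "\<dots> \<in> K" by (intro K_sum K_mult C mon)
  finally show ?thesis .
qed

end

subsection \<open>Closure of S and S[t]\<close>

lemma mvars_add: "mvars (f + g) \<subseteq> mvars f \<union> mvars g"
  unfolding mvars_def using keys_add[of f g] by blast

lemma mvars_uminus: "mvars (- f) = mvars f"
  unfolding mvars_def by (simp add: in_keys_iff)

lemma keys_add_nat: "Poly_Mapping.keys ((a::nat \<Rightarrow>\<^sub>0 nat) + b) \<subseteq> Poly_Mapping.keys a \<union> Poly_Mapping.keys b"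
  by (rule keys_add)

lemma mvars_mult: "mvars (f * g) \<subseteq> mvars f \<union> mvars g"
proof
  fix v assume "v \<in> mvars (f * g)"
  then obtain m where m: "m \<in> Poly_Mapping.keys (f * g)" "v \<in> Poly_Mapping.keys m"
    by (auto simp: mvars_def)
  then obtain a b where "m = a + b" "a \<in> Poly_Mapping.keys f" "b \<in> Poly_Mapping.keys g"
    using keys_mult[of f g] by blast
  then show "v \<in> mvars f \<union> mvars g"
    using m(2) keys_add_nat[of a b] by (auto simp: mvars_def)
qed

lemma mvars_single0[simp]: "mvars (Poly_Mapping.single 0 c) = {}"
  by (simp add: mvars_def)

lemma mvars_zero[simp]: "mvars 0 = {}" and mvars_one[simp]: "mvars 1 = {}"
  by (simp_all add: mvars_def)

lemma mvars_Var: "mvars (Var v :: 'a::comm_ring_1 mpol) = {v}"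
  by (simp add: mvars_def Var_def)

lemma Sring_add: "f \<in> Sring n \<Longrightarrow> g \<in> Sring n \<Longrightarrow> f + g \<in> Sring n"
  using mvars_add[of f g] by (auto simp: Sring_def)
lemma Sring_mult: "f \<in> Sring n \<Longrightarrow> g \<in> Sring n \<Longrightarrow> f * g \<in> Sring n"
  using mvars_mult[of f g] by (auto simp: Sring_def)
lemma Sring_uminus: "f \<in> Sring n \<Longrightarrow> - f \<in> Sring n"
  by (auto simp: Sring_def mvars_uminus)
lemma Sring_diff: "f \<in> Sring n \<Longrightarrow> g \<in> Sring n \<Longrightarrow> f - g \<in> Sring n"
  using Sring_add[of f n "-g"] Sring_uminus[of g n] by simp
lemma Sring_0[simp]: "0 \<in> Sring n" and Sring_1[simp]: "1 \<in> Sring n"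
  by (simp_all add: Sring_def)
lemma Sring_single0[simp]: "Poly_Mapping.single 0 c \<in> Sring n"
  by (simp add: Sring_def)
lemma Sring_Var: "1 \<le> v \<Longrightarrow> v \<le> n \<Longrightarrow> Var v \<in> Sring n"
  by (simp add: Sring_def mvars_Var)
lemma Sring_e: "j \<le> n \<Longrightarrow> e j \<in> Sring n"
  by (simp add: e_def Sring_Var)
lemma Sring_sum: "(\<And>x. x \<in> S \<Longrightarrow> F x \<in> Sring n) \<Longrightarrow> sum F S \<in> Sring n"
  by (induct S rule: infinite_finite_induct) (auto intro: Sring_add)

lemma Sring_t_add: "P \<in> Sring_t n \<Longrightarrow> Q \<in> Sring_t n \<Longrightarrow> P + Q \<in> Sring_t n"
  by (auto simp: Sring_t_def intro: Sring_add)
lemma Sring_t_mult: "P \<in> Sring_t n \<Longrightarrow> Q \<in> Sring_t n \<Longrightarrow> P * Q \<in> Sring_t n"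
  by (auto simp: Sring_t_def coeff_mult intro!: Sring_sum Sring_mult)
lemma Sring_t_uminus: "P \<in> Sring_t n \<Longrightarrow> - P \<in> Sring_t n"
  by (auto simp: Sring_t_def intro: Sring_uminus)
lemma Sring_t_diff: "P \<in> Sring_t n \<Longrightarrow> Q \<in> Sring_t n \<Longrightarrow> P - Q \<in> Sring_t n"
  by (auto simp: Sring_t_def intro: Sring_diff)
lemma Sring_t_0[simp]: "0 \<in> Sring_t n"
  by (simp add: Sring_t_def)
lemma Sring_t_1[simp]: "1 \<in> Sring_t n"
  by (simp add: Sring_t_def coeff_1)
lemma Sring_t_monom: "c \<in> Sring n \<Longrightarrow> monom c i \<in> Sring_t n"
  by (simp add: Sring_t_def coeff_monom)
lemma Sring_t_const: "c \<in> Sring n \<Longrightarrow> [:c:] \<in> Sring_t n"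
  using Sring_t_monom[of c n 0] by (simp add: monom_0)
lemma Sring_t_sum: "(\<And>x. x \<in> S \<Longrightarrow> F x \<in> Sring_t n) \<Longrightarrow> sum F S \<in> Sring_t n"
  by (induct S rule: infinite_finite_induct) (auto intro: Sring_t_add)

lemma gen_ideal_idl:
  fixes G :: "'a::comm_ring_1 mpol poly set"
  assumes "finite G"
  shows "idl (Sring_t n) (gen_ideal (Sring_t n) G)"
proof
  fix a b :: "'a mpol poly" assume "a \<in> gen_ideal (Sring_t n) G" "b \<in> gen_ideal (Sring_t n) G"
  then obtain c d where c: "\<forall>g\<in>G. c g \<in> Sring_t n" "a = (\<Sum>g\<in>G. c g * g)"
    and d: "\<forall>g\<in>G. d g \<in> Sring_t n" "b = (\<Sum>g\<in>G. d g * g)"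
    by (auto simp: gen_ideal_def)
  show "a + b \<in> gen_ideal (Sring_t n) G"
    unfolding gen_ideal_def
    by (rule CollectI, rule exI[of _ "\<lambda>g. c g + d g"])
       (simp add: c d Sring_t_add sum.distrib distrib_right)
next
  fix r a :: "'a mpol poly" assume r: "r \<in> Sring_t n" and "a \<in> gen_ideal (Sring_t n) G"
  then obtain c where c: "\<forall>g\<in>G. c g \<in> Sring_t n" "a = (\<Sum>g\<in>G. c g * g)"
    by (auto simp: gen_ideal_def)
  show "r * a \<in> gen_ideal (Sring_t n) G"
    unfolding gen_ideal_def
    by (rule CollectI, rule exI[of _ "\<lambda>g. r * c g"])
       (simp add: c r Sring_t_mult sum_distrib_left mult.assoc)
next
  show "0 \<in> gen_ideal (Sring_t n) G"
    unfolding gen_ideal_def by (rule CollectI, rule exI[of _ "\<lambda>g. 0"]) simp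
qed (auto intro: Sring_t_mult)

lemma gen_ideal_gen:
  assumes "finite G" "g \<in> G"
  shows "g \<in> gen_ideal (Sring_t n) G"
  unfolding gen_ideal_def
proof (rule CollectI, rule exI[of _ "\<lambda>h. if h = g then 1 else 0"], intro conjI)
  show "g = (\<Sum>h\<in>G. (if h = g then 1 else 0) * h)"
  proof -
    have "(\<Sum>h\<in>G. (if h = g then 1 else 0) * h) = (\<Sum>h\<in>G. if h = g then h else 0)"
      by (rule sum.cong) auto
    then show ?thesis using assms by simp
  qed
qed auto

definition isY :: "nat \<Rightarrow> nat \<Rightarrow> nat \<Rightarrow> bool" where
  "isY p q v \<longleftrightarrow> v = q*p \<or> ((q-1)*p < v \<and> v < q*p)"

definition kidx :: "nat \<Rightarrow> nat \<Rightarrow> nat \<Rightarrow> nat" where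
  "kidx p q v = (if v = q*p then 0 else v - (q-1)*p)"

definition gsub :: "nat \<Rightarrow> nat \<Rightarrow> nat \<Rightarrow> 'a::comm_ring_1 mpol poly" where
  "gsub p q v = (if isY p q v then [:Var v:] - fgen p q (kidx p q v) else [:Var v:])"

definition Phi :: "nat \<Rightarrow> nat \<Rightarrow> 'a::comm_ring_1 mpol \<Rightarrow> 'a mpol poly" where
  "Phi p q = mp_eval (\<lambda>c. [:Poly_Mapping.single 0 c:]) (gsub p q)"

lemma hom_C: "comm_ring_hom (\<lambda>c::'a::comm_ring_1. [:Poly_Mapping.single (0::nat\<Rightarrow>\<^sub>0nat) c:])"
  by unfold_locales (simp_all add: single_add mult_single one_pCons mult.commute)

lemma Phi_hom: "comm_ring_hom (Phi p q :: 'a::comm_ring_1 mpol \<Rightarrow> _)"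
  unfolding Phi_def by (rule mp_eval_hom[OF hom_C])

lemma kidx_lt: "isY p q v \<Longrightarrow> 1 \<le> p \<Longrightarrow> kidx p q v < p"
  by (cases q) (auto simp: isY_def kidx_def)

lemma fgen_Sring_t:
  assumes "k < p"
  shows "(fgen p q k :: 'a::comm_ring_1 mpol poly) \<in> Sring_t (q*p)"
proof (cases "k = 0")
  case True
  have "j * p \<le> q * p" if "j \<le> q" for j using that by (simp add: mult_le_mono1)
  then show ?thesis using True unfolding fgen_def f0_def
    by (auto intro!: Sring_t_add Sring_t_monom Sring_t_sum Sring_e simp: Sring_Var)
next
  case False
  have "j * p + k \<le> q * p" if "j < q" for j
  proof -
    have "j * p \<le> (q - 1) * p" using that by (intro mult_le_mono1) linarith
    moreover have "(q - 1) * p + p = q * p" using that by (cases q) auto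
    ultimately show ?thesis using assms by linarith
  qed
  then show ?thesis using False unfolding fgen_def fk_def
    by (auto intro!: Sring_t_monom Sring_t_sum Sring_e)
qed

lemma Phi_zero_in_I:
  fixes x :: "'a::comm_ring_1 mpol"
  assumes x: "x \<in> Sring (q*p)" and z: "Phi p q x = 0" and p: "1 \<le> p"
  shows "x \<in> I_ideal p q"
proof -
  let ?G = "(fgen p q ` {0..<p}) :: 'a mpol poly set"
  let ?K = "gen_ideal (Sring_t (q*p)) ?G"
  have fin: "finite ?G" by simp
  interpret idl "Sring_t (q*p)" ?K by (rule gen_ideal_idl[OF fin])
  have "mp_eval (\<lambda>c. [:Poly_Mapping.single 0 c:]) (\<lambda>v. [:Var v:]) x
      - mp_eval (\<lambda>c. [:Poly_Mapping.single 0 c:]) (gsub p q) x \<in> ?K"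
  proof (rule mp_eval_ideal_cong)
    fix c :: 'a show "[:Poly_Mapping.single 0 c:] \<in> Sring_t (q*p)"
      by (intro Sring_t_const Sring_single0)
  next
    fix v assume "v \<in> mvars x"
    then have v: "1 \<le> v" "v \<le> q * p" using x by (auto simp: Sring_def)
    have V: "[:Var v :: 'a mpol:] \<in> Sring_t (q*p)" by (intro Sring_t_const Sring_Var v)
    show "[:Var v :: 'a mpol:] \<in> Sring_t (q*p) \<and> (gsub p q v :: 'a mpol poly) \<in> Sring_t (q*p) \<and> [:Var v:] - gsub p q v \<in> ?K"
    proof (cases "isY p q v")
      case True
      have k: "kidx p q v < p" by (rule kidx_lt[OF True p])
      have F: "(fgen p q (kidx p q v) :: 'a mpol poly) \<in> Sring_t (q*p)" by (rule fgen_Sring_t[OF k])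
      have "fgen p q (kidx p q v) \<in> ?K" using k by (intro gen_ideal_gen fin) auto
      then show ?thesis using True V F Sring_t_diff[OF V F] by (simp add: gsub_def)
    next
      case False
      then show ?thesis using V by (simp add: gsub_def K_zero)
    qed
  qed
  then have "[:x:] \<in> ?K" using z by (simp add: mp_eval_pconst Phi_def)
  then show ?thesis using x by (simp add: I_ideal_def)
qed

lemma sum_shift_window:
  fixes c L n :: nat
  assumes "c + L < n"
  shows "(\<Sum>a<n. if c \<le> a \<and> a - c \<le> L then h a else 0) = (\<Sum>j\<le>L. h (c + j))"
proof -
  have "(\<Sum>a<n. if c \<le> a \<and> a - c \<le> L then h a else 0) = (\<Sum>a\<in>{a\<in>{..<n}. c \<le> a \<and> a - c \<le> L}. h a)"
    by (rule sum.inter_filter[symmetric]) simp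
  also have "{a\<in>{..<n}. c \<le> a \<and> a - c \<le> L} = {0+c..L+c}" using assms by auto
  also have "(\<Sum>a\<in>{0+c..L+c}. h a) = (\<Sum>j\<in>{0..L}. h (j + c))"
    by (rule sum.shift_bounds_cl_nat_ivl)
  also have "\<dots> = (\<Sum>j\<le>L. h (c + j))" by (simp add: atLeast0AtMost add.commute)
  finally show ?thesis .
qed

lemma X_pow_const: "[:0, 1:] ^ k * [:c:] = monom c k"
  by (simp add: monom_altdef mult.commute)

definition Dcor :: "nat \<Rightarrow> nat \<Rightarrow> nat \<Rightarrow> 'a::comm_ring_1 mpol poly" where
  "Dcor p q n = (if isY p q n then - fgen p q (kidx p q n) else 0)"

lemma Phi_e:
  assumes "1 \<le> p" "1 \<le> q"
  shows "Phi p q (e n) = [:e n:] + (Dcor p q n :: 'a::comm_ring_1 mpol poly)"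
proof (cases "n = 0")
  case True
  have "\<not> isY p q 0" using assms by (auto simp: isY_def)
  then show ?thesis using True comm_ring_hom.axioms[OF Phi_hom]
    by (simp add: e_def Dcor_def mp_eval_one[OF hom_C] Phi_def one_pCons)
next
  case False
  then show ?thesis
    by (simp add: e_def Dcor_def Phi_def mp_eval_Var[OF hom_C] gsub_def)
qed

lemma Phi_0: "Phi p q 0 = 0"
  by (simp add: Phi_def mp_eval_zero)

lemma sum_f0:
  assumes p: "1 \<le> p" and q: "1 \<le> q"
  shows "(\<Sum>j\<le>q. [:0,1:] ^ (q - j) * Phi p q (e (j*p))) = (0 :: 'a::comm_ring_1 mpol poly)"
proof -
  let ?X = "[:0,1:] :: 'a mpol poly"
  have split: "(\<Sum>j\<le>q. ?X ^ (q - j) * Phi p q (e (j*p))) =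
     (\<Sum>j\<le>q. ?X ^ (q - j) * [:e (j*p):]) + (\<Sum>j\<le>q. ?X ^ (q - j) * Dcor p q (j*p))"
    by (simp add: Phi_e[OF p q] distrib_left sum.distrib)
  have ins: "{..q} = insert 0 {1..q}" by auto
  have A: "(\<Sum>j\<le>q. ?X ^ (q - j) * [:e (j*p):]) = f0 p q"
    unfolding ins f0_def by (simp add: monom_altdef e_def)
  have isY: "isY p q (j*p) \<longleftrightarrow> j = q" if "j \<le> q" for j
  proof
    assume "isY p q (j*p)"
    then consider "j * p = q * p" | "(q-1)*p < j*p" "j*p < q*p" by (auto simp: isY_def)
    then show "j = q"
    proof cases
      case 1 then show ?thesis using p by simp
    next
      case 2 then have "q - 1 < j" "j < q" by (simp_all add: mult_less_cancel2)
      then show ?thesis by linarith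
    qed
  qed (simp add: isY_def)
  have B: "(\<Sum>j\<le>q. ?X ^ (q - j) * Dcor p q (j*p)) = - f0 p q"
  proof -
    have "(\<Sum>j\<le>q. ?X ^ (q - j) * Dcor p q (j*p)) = (\<Sum>j\<le>q. if j = q then - f0 p q else 0)"
      by (rule sum.cong[OF refl]) (auto simp: isY Dcor_def kidx_def fgen_def)
    then show ?thesis by simp
  qed
  show ?thesis unfolding split A B by simp
qed

lemma sum_fk:
  assumes i: "1 \<le> i" "i < p" and q: "1 \<le> q"
  shows "(\<Sum>j<q. [:0,1:] ^ (q - 1 - j) * Phi p q (e (j*p + i))) = (0 :: 'a::comm_ring_1 mpol poly)"
proof -
  let ?X = "[:0,1:] :: 'a mpol poly"
  have p: "1 \<le> p" using i by simp
  have split: "(\<Sum>j<q. ?X ^ (q - 1 - j) * Phi p q (e (j*p + i))) =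
     (\<Sum>j<q. ?X ^ (q - 1 - j) * [:e (j*p + i):]) + (\<Sum>j<q. ?X ^ (q - 1 - j) * Dcor p q (j*p + i))"
    by (simp add: Phi_e[OF p q] distrib_left sum.distrib)
  have A: "(\<Sum>j<q. ?X ^ (q - 1 - j) * [:e (j*p + i):]) = fk p q i"
    unfolding fk_def by (simp add: monom_altdef atLeast0LessThan)
  have qp: "(q - 1) * p + p = q * p" using q by (cases q) auto
  have isY: "isY p q (j*p + i) \<longleftrightarrow> j = q - 1" if "j < q" for j
  proof -
    have le: "j * p \<le> (q - 1) * p" using that by (intro mult_le_mono1) linarith
    have ne: "j * p + i \<noteq> q * p" using le qp i by linarith
    show ?thesis
    proof
      assume "isY p q (j*p + i)"
      then have "(q-1)*p < j*p + i" using ne by (auto simp: isY_def)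
      show "j = q - 1"
      proof (rule ccontr)
        assume "j \<noteq> q - 1"
        then have "Suc j \<le> q - 1" using that by linarith
        then have "Suc j * p \<le> (q - 1) * p" by (rule mult_le_mono1)
        then show False using \<open>(q-1)*p < j*p + i\<close> i by simp
      qed
    next
      assume "j = q - 1"
      then show "isY p q (j*p + i)" using qp i by (auto simp: isY_def)
    qed
  qed
  have kidx: "kidx p q ((q-1)*p + i) = i" using qp i by (auto simp: kidx_def)
  have B: "(\<Sum>j<q. ?X ^ (q - 1 - j) * Dcor p q (j*p + i)) = - fk p q i"
  proof -
    have "(\<Sum>j<q. ?X ^ (q - 1 - j) * Dcor p q (j*p + i)) = (\<Sum>j<q. if j = q - 1 then - fk p q i else 0)"
      by (rule sum.cong[OF refl]) (use i in \<open>auto simp: isY Dcor_def kidx[simplified] fgen_def\<close>)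
    then show ?thesis using q by simp
  qed
  show ?thesis unfolding split A B by simp
qed

lemma col_zero:
  assumes p: "1 \<le> p" and q: "1 \<le> q" and c': "c' < (q - 1) + (p - 1) * q"
  shows "(\<Sum>a<2*q-1. [:0,1:] ^ (2*q-2-a) * Phi p q (A_entry p q a c')) = (0 :: 'a::comm_ring_1 mpol poly)"
proof -
  let ?X = "[:0,1:] :: 'a mpol poly"
  show ?thesis
  proof (cases "c' < q - 1")
    case True
    have "(\<Sum>a<2*q-1. ?X ^ (2*q-2-a) * Phi p q (A_entry p q a c')) =
        (\<Sum>a<2*q-1. if c' \<le> a \<and> a - c' \<le> q then ?X ^ (2*q-2-a) * Phi p q (e ((a - c') * p)) else 0)"
      unfolding A_entry_def if_P[OF True] by (rule sum.cong[OF refl]) (simp add: Phi_0)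
    also have "\<dots> = (\<Sum>j\<le>q. ?X ^ (2*q-2-(c'+j)) * Phi p q (e ((c' + j - c') * p)))"
      by (rule sum_shift_window) (use True in linarith)
    also have "\<dots> = (\<Sum>j\<le>q. ?X ^ (q-2-c') * (?X ^ (q - j) * Phi p q (e (j * p))))"
    proof (rule sum.cong[OF refl])
      fix j assume "j \<in> {..q}"
      then have "2*q-2-(c'+j) = (q-2-c') + (q - j)" using True by auto
      then show "?X ^ (2*q-2-(c'+j)) * Phi p q (e ((c' + j - c') * p)) = ?X ^ (q-2-c') * (?X ^ (q - j) * Phi p q (e (j * p)))"
        by (simp add: power_add mult.assoc)
    qed
    also have "\<dots> = ?X ^ (q-2-c') * (\<Sum>j\<le>q. ?X ^ (q - j) * Phi p q (e (j * p)))"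
      by (simp add: sum_distrib_left)
    also have "\<dots> = 0" by (simp add: sum_f0[OF p q])
    finally show ?thesis .
  next
    case False
    define i where "i = (c' - (q - 1)) div q + 1"
    define c where "c = (c' - (q - 1)) mod q"
    have c: "c < q" using q by (simp add: c_def)
    have i1: "1 \<le> i" by (simp add: i_def)
    have "c' - (q - 1) < (p - 1) * q" using c' False by linarith
    then have "(c' - (q - 1)) div q < p - 1" by (simp add: less_mult_imp_div_less)
    then have ip: "i < p" unfolding i_def by linarith
    have "(\<Sum>a<2*q-1. ?X ^ (2*q-2-a) * Phi p q (A_entry p q a c')) =
        (\<Sum>a<2*q-1. if c \<le> a \<and> a - c \<le> q - 1 then ?X ^ (2*q-2-a) * Phi p q (e ((a - c) * p + i)) else 0)"
      unfolding A_entry_def if_not_P[OF False] Let_def i_def[symmetric] c_def[symmetric]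
      by (rule sum.cong[OF refl]) (simp add: Phi_0)
    also have "\<dots> = (\<Sum>j\<le>q-1. ?X ^ (2*q-2-(c+j)) * Phi p q (e ((c + j - c) * p + i)))"
      by (rule sum_shift_window) (use c in linarith)
    also have "\<dots> = (\<Sum>j<q. ?X ^ (q-1-c) * (?X ^ (q - 1 - j) * Phi p q (e (j * p + i))))"
    proof -
      have "{..q-1} = {..<q}" using q by auto
      moreover have "?X ^ (2*q-2-(c+j)) * Phi p q (e ((c + j - c) * p + i)) = ?X ^ (q-1-c) * (?X ^ (q - 1 - j) * Phi p q (e (j * p + i)))"
        if "j < q" for j
      proof -
        have "2*q-2-(c+j) = (q-1-c) + (q - 1 - j)" using c that by auto
        then show ?thesis by (simp add: power_add mult.assoc)
      qed
      ultimately show ?thesis by (intro sum.cong) auto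
    qed
    also have "\<dots> = ?X ^ (q-1-c) * (\<Sum>j<q. ?X ^ (q - 1 - j) * Phi p q (e (j * p + i)))"
      by (simp add: sum_distrib_left)
    also have "\<dots> = 0" by (simp only: sum_fk[OF i1 ip q] mult_zero_right)
    finally show ?thesis .
  qed
qed

lemma pick_atLeast0: "a < n \<Longrightarrow> pick {0..<n} a = a"
proof (induct a)
  case 0 then show ?case by (simp add: Least_eq_0)
next
  case (Suc a)
  then have "pick {0..<n} a = a" by simp
  then show ?case using Suc.prems by (auto intro!: Least_equality)
qed

lemma det_zero_by_left_kernel:
  fixes N :: "'b::comm_ring_1 mat"
  assumes N: "N \<in> carrier_mat n n" and n: "0 < n"
    and v1: "v (n - 1) = 1"
    and ker: "\<And>j. j < n \<Longrightarrow> (\<Sum>a<n. v a * N $$ (a, j)) = 0"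
  shows "det N = 0"
proof -
  let ?B = "adj_mat N"
  have B: "?B \<in> carrier_mat n n" and NB: "N * ?B = det N \<cdot>\<^sub>m 1\<^sub>m n"
    using adj_mat[OF N] by auto
  have "(\<Sum>a<n. v a * (N * ?B) $$ (a, n - 1)) = (\<Sum>a<n. v a * (if a = n - 1 then det N else 0))"
    by (rule sum.cong[OF refl]) (use n in \<open>simp add: NB\<close>)
  also have "\<dots> = (\<Sum>a<n. if a = n - 1 then v a * det N else 0)"
    by (rule sum.cong) auto
  also have "\<dots> = det N" using n v1 by (simp add: sum.delta)
  finally have 1: "(\<Sum>a<n. v a * (N * ?B) $$ (a, n - 1)) = det N" .
  have "(\<Sum>a<n. v a * (N * ?B) $$ (a, n - 1)) = (\<Sum>a<n. v a * (\<Sum>k<n. N $$ (a, k) * ?B $$ (k, n - 1)))"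
  proof (rule sum.cong[OF refl])
    fix a assume "a \<in> {..<n}"
    then show "v a * (N * ?B) $$ (a, n - 1) = v a * (\<Sum>k<n. N $$ (a, k) * ?B $$ (k, n - 1))"
      using N B n by (simp add: scalar_prod_def atLeast0LessThan)
  qed
  also have "\<dots> = (\<Sum>k<n. (\<Sum>a<n. v a * N $$ (a, k)) * ?B $$ (k, n - 1))"
    unfolding sum_distrib_left sum_distrib_right mult.assoc by (rule sum.swap)
  also have "\<dots> = 0" by (simp add: ker)
  finally show ?thesis using 1 by simp
qed

lemma minor_Phi_zero:
  assumes p: "1 \<le> p" and q: "1 \<le> q" and d: "d \<in> max_minors p q"
  shows "Phi p q d = (0 :: 'a::comm_ring_1 mpol poly)"
proof -
  let ?n = "2*q - 1"
  let ?m = "(q - 1) + (p - 1) * q"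
  obtain C where C: "C \<subseteq> {0..<?m}" "card C = ?n" and dd: "d = det (submatrix (A_mat p q :: 'a mpol mat) {0..<?n} C)"
    using d unfolding max_minors_def by blast
  let ?A = "A_mat p q :: 'a mpol mat"
  let ?M = "submatrix ?A {0..<?n} C"
  have dr: "dim_row ?A = ?n" "dim_col ?A = ?m" by (simp_all add: A_mat_def)
  have r: "{i. i < dim_row ?A \<and> i \<in> {0..<?n}} = {0..<?n}" unfolding dr by auto
  have cc: "{j. j < dim_col ?A \<and> j \<in> C} = C" unfolding dr using C by auto
  have dM1: "dim_row ?M = ?n"
  proof -
    have "dim_row ?M = card {i. i < dim_row ?A \<and> i \<in> {0..<?n}}" by (rule dim_submatrix(1))
    also have "\<dots> = ?n" unfolding r by simp
    finally show ?thesis .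
  qed
  have dM2: "dim_col ?M = ?n"
  proof -
    have "dim_col ?M = card {j. j < dim_col ?A \<and> j \<in> C}" by (rule dim_submatrix(2))
    also have "\<dots> = ?n" unfolding cc by (rule C(2))
    finally show ?thesis .
  qed
  have M: "?M \<in> carrier_mat ?n ?n" unfolding carrier_mat_def using dM1 dM2 by blast
  have Mij: "?M $$ (a, j) = A_entry p q a (pick C j)" if a: "a < ?n" and j: "j < ?n" for a j
  proof -
    have "pick C j \<in> C" using j C by (intro pick_in_set_le) simp
    then have pj: "pick C j < ?m" using C by auto
    have "?M $$ (a, j) = ?A $$ (pick {0..<?n} a, pick C j)"
      by (rule submatrix_index) (simp_all only: r cc card_atLeastLessThan diff_zero a j C(2))
    also have "\<dots> = ?A $$ (a, pick C j)" using a by (simp only: pick_atLeast0)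
    also have "\<dots> = A_entry p q a (pick C j)" unfolding A_mat_def using a pj by simp
    finally show ?thesis .
  qed
  let ?N = "map_mat (Phi p q) ?M"
  have NC: "?N \<in> carrier_mat ?n ?n" using M by simp
  have Nij: "?N $$ (a, j) = Phi p q (A_entry p q a (pick C j))" if a: "a < ?n" and j: "j < ?n" for a j
    using a j dM1 dM2 Mij[OF a j] by simp
  have "det ?N = 0"
  proof (rule det_zero_by_left_kernel[OF NC, where v = "\<lambda>a. [:0,1:] ^ (?n - 1 - a)"])
    show "0 < ?n" using q by simp
    show "[:0,1:] ^ (?n - 1 - (?n - 1)) = 1" by simp
    fix j assume j: "j < ?n"
    have "pick C j \<in> C" using j C by (intro pick_in_set_le) simp
    then have pj: "pick C j < ?m" using C by auto
    have "(\<Sum>a<?n. [:0,1:] ^ (?n - 1 - a) * ?N $$ (a, j)) =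
        (\<Sum>a<2*q-1. [:0,1:] ^ (2*q-2-a) * Phi p q (A_entry p q a (pick C j)))"
    proof (rule sum.cong[OF refl])
      fix a assume "a \<in> {..<?n}"
      then have a: "a < ?n" by simp
      have e: "?n - 1 - a = 2*q-2-a" by simp
      show "[:0,1:] ^ (?n - 1 - a) * ?N $$ (a, j) = [:0,1:] ^ (2*q-2-a) * Phi p q (A_entry p q a (pick C j))"
        unfolding e Nij[OF a j] ..
    qed
    also have "\<dots> = 0" by (rule col_zero[OF p q pj])
    finally show "(\<Sum>a<?n. [:0,1:] ^ (?n - 1 - a) * ?N $$ (a, j)) = 0" .
  qed
  then show ?thesis unfolding dd comm_ring_hom.hom_det[OF Phi_hom] .
qed

theorem proposition4p1:
  fixes p q :: nat
  assumes "p \<ge> 3" and "q \<ge> 1"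
  shows "radical_in (Sring (q*p)) (J_ideal p q :: 'a::field mpol set)
           \<subseteq> radical_in (Sring (q*p)) (I_ideal p q)
         \<and> (prime p \<and> card (UNIV :: 'a set) = p \<longrightarrow>
           radical_in (Sring (q*p)) (J_ideal p q :: 'a mpol set) \<subseteq> I_ideal p q)"
proof -
  have p: "1 \<le> p" using assms(1) by simp
  have q: "1 \<le> q" using assms(2) .
  have key: "x \<in> I_ideal p q"
    if xr: "x \<in> radical_in (Sring (q*p)) (J_ideal p q :: 'a mpol set)" for x
  proof -
    from xr obtain m where x: "x \<in> Sring (q*p)" and xm: "x ^ m \<in> J_ideal p q"
      unfolding radical_in_def by blast
    obtain c where xm_eq: "x ^ m = (\<Sum>d\<in>max_minors p q. c d * d)"
      using xm unfolding J_ideal_def gen_ideal_def by blast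
    interpret comm_ring_hom "Phi p q :: 'a mpol \<Rightarrow> 'a mpol poly" by (rule Phi_hom)
    have "Phi p q x ^ m = Phi p q (x ^ m)" by (rule hom_power[symmetric])
    also have "\<dots> = (\<Sum>d\<in>max_minors p q. Phi p q (c d) * Phi p q d)"
      unfolding xm_eq hom_sum hom_mult ..
    also have "\<dots> = 0"
      by (rule sum.neutral) (use minor_Phi_zero[OF p q] in auto)
    finally have "Phi p q x ^ m = 0" .
    then have "Phi p q x = 0" by simp
    then show ?thesis by (rule Phi_zero_in_I[OF x _ p])
  qed
  have "x \<in> radical_in (Sring (q*p)) (I_ideal p q)"
    if "x \<in> radical_in (Sring (q*p)) (J_ideal p q :: 'a mpol set)" for x
    using key[OF that] that unfolding radical_in_def by (metis (mono_tags, lifting) mem_Collect_eq power_one_right)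
  then show ?thesis using key by blast
qed

end
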